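(* Let $G=\mathbb{Z}_2\times\mathbb{Z}_4$ and let $\theta$ be a normalised orthomorphism of $G$. Then: (i) $|A_{44}\cap\theta(A_{44})|=|A_{44}\cap\theta(A_{24})|=|A_{42}\cap\theta(A_{44})|=|A_{42}\cap\theta(A_{24})|=1$. (ii) If $A_{22}=\{u\}$, then $\theta(A_{42})=\{u,\ u\theta(u)\}$ and $A_{24}=\{\theta(u),\ u\theta(u)\}$. (iii) If $A_{22}=\{u\}$, then $\{g^{-1}\theta(g): g\in A_{44}\}=\{u,\theta(u)\}$.
   Context: $G$ is written multiplicatively with identity $e$; $o(g)$ is the order of $g$. A normalised orthomorphism of $G$ is a bijection $\theta\colon G\to G$ with $\theta(e)=e$ such that $x\mapsto x^{-1}\theta(x)$ is also a bijection of $G$. For such $\theta$: $A_{44}=\{x: o(x)=4, o(\theta(x))=4\}$, $A_{42}=\{x: o(x)=4, o(\theta(x))=2\}$, $A_{24}=\{x: o(x)=2, o(\theta(x))=4\}$, $A_{22}=\{x: o(x)=2, o(\theta(x))=2\}$; $\theta(S)$ denotes the image of a set $S$. *)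

theory Defs
  imports "HOL-Algebra.Algebra"
begin

definition Z2Z4 :: "(int \<times> int) monoid" where
  "Z2Z4 = DirProd (integer_mod_group 2) (integer_mod_group 4)"

definition normalised_orthomorphism :: "('a, 'b) monoid_scheme \<Rightarrow> ('a \<Rightarrow> 'a) \<Rightarrow> bool" where
  "normalised_orthomorphism G \<theta> \<longleftrightarrow>
     bij_betw \<theta> (carrier G) (carrier G) \<and> \<theta> \<one>\<^bsub>G\<^esub> = \<one>\<^bsub>G\<^esub> \<and>
     bij_betw (\<lambda>x. inv\<^bsub>G\<^esub> x \<otimes>\<^bsub>G\<^esub> \<theta> x) (carrier G) (carrier G)"

definition A_set :: "('a, 'b) monoid_scheme \<Rightarrow> ('a \<Rightarrow> 'a) \<Rightarrow> nat \<Rightarrow> nat \<Rightarrow> 'a set" where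
  "A_set G \<theta> i j = {x \<in> carrier G. group.ord G x = i \<and> group.ord G (\<theta> x) = j}"

end

theory Submission imports Defs begin

lemma grp: "group Z2Z4"
  unfolding Z2Z4_def by (intro DirProd_group group_integer_mod_group)

definition Cs :: "(int \<times> int) set" where
  "Cs = {(0,0),(0,1),(0,2),(0,3),(1,0),(1,1),(1,2),(1,3)}"

lemma carr: "carrier Z2Z4 = Cs"
proof -
  have a: "{0..<2::int} = {0,1}" by auto
  have b: "{0..<4::int} = {0,1,2,3}" by auto
  show ?thesis unfolding Z2Z4_def Cs_def
    by (simp add: carrier_integer_mod_group a b)
qed

lemma one: "\<one>\<^bsub>Z2Z4\<^esub> = (0,0)"
  unfolding Z2Z4_def by simp

lemma mul: "x \<otimes>\<^bsub>Z2Z4\<^esub> y = ((fst x + fst y) mod 2, (snd x + snd y) mod 4)"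
  unfolding Z2Z4_def by (simp add: mult_DirProd')

lemma inv: "x \<in> carrier Z2Z4 \<Longrightarrow> inv\<^bsub>Z2Z4\<^esub> x = ((- fst x) mod 2, (- snd x) mod 4)"
  unfolding Z2Z4_def
  by (cases x) (simp add: inv_DirProd carrier_integer_mod_group)

lemma pow: "x [^]\<^bsub>Z2Z4\<^esub> (n::nat) = ((int n * fst x) mod 2, (int n * snd x) mod 4)"
proof (induction n)
  case 0 then show ?case by (simp add: one)
next
  case (Suc n) then show ?case
    by (simp add: mul mod_add_right_eq algebra_simps)
qed

definition ordf :: "int \<times> int \<Rightarrow> nat" where
  "ordf x = (if x = (0,0) then 1 else if snd x = 1 \<or> snd x = 3 then 4 else 2)"

lemma ord: assumes "x \<in> carrier Z2Z4" shows "group.ord Z2Z4 x = ordf x"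
proof -
  have "\<forall>n::nat. x [^]\<^bsub>Z2Z4\<^esub> n = \<one>\<^bsub>Z2Z4\<^esub> \<longleftrightarrow> ordf x dvd n"
    using assms unfolding carr Cs_def pow one ordf_def
    by (elim insertE emptyE; simp; presburger)
  then show ?thesis using group.ord_unique[OF grp assms] by blast
qed

definition mulc :: "int \<times> int \<Rightarrow> int \<times> int \<Rightarrow> int \<times> int" where
  "mulc x y = ((fst x + fst y) mod 2, (snd x + snd y) mod 4)"
definition invc :: "int \<times> int \<Rightarrow> int \<times> int" where
  "invc x = ((- fst x) mod 2, (- snd x) mod 4)"
definition csl :: "(int \<times> int) list" where
  "csl = [(0,0),(0,1),(0,2),(0,3),(1,0),(1,1),(1,2),(1,3)]"
lemma Cs_csl: "Cs = set csl" by (simp add: Cs_def csl_def)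
definition afl :: "(int \<times> int \<Rightarrow> int \<times> int) \<Rightarrow> nat \<Rightarrow> nat \<Rightarrow> (int \<times> int) list" where
  "afl \<theta> i j = filter (\<lambda>x. ordf x = i \<and> ordf (\<theta> x) = j) csl"
abbreviation "Af \<theta> i j \<equiv> set (afl \<theta> i j)"

definition Qc :: "(int \<times> int \<Rightarrow> int \<times> int) \<Rightarrow> bool" where
  "Qc \<theta> \<longleftrightarrow> (card (Af \<theta> 4 4 \<inter> \<theta> ` Af \<theta> 4 4) = 1
       \<and> card (Af \<theta> 4 4 \<inter> \<theta> ` Af \<theta> 2 4) = 1
       \<and> card (Af \<theta> 4 2 \<inter> \<theta> ` Af \<theta> 4 4) = 1
       \<and> card (Af \<theta> 4 2 \<inter> \<theta> ` Af \<theta> 2 4) = 1)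
     \<and> (\<forall>u. Af \<theta> 2 2 = {u} \<longrightarrow>
           \<theta> ` Af \<theta> 4 2 = {u, mulc u (\<theta> u)}
         \<and> Af \<theta> 2 4 = {\<theta> u, mulc u (\<theta> u)})
     \<and> (\<forall>u. Af \<theta> 2 2 = {u} \<longrightarrow>
           (\<lambda>g. mulc (invc g) (\<theta> g)) ` Af \<theta> 4 4 = {u, \<theta> u})"

lemmas leaf_simps = Qc_def afl_def csl_def ordf_def mulc_def invc_def
   Int_insert_left card_insert_if

definition ok :: "(int \<times> int) \<times> (int \<times> int) \<Rightarrow> (int \<times> int) \<times> (int \<times> int) \<Rightarrow> bool" where
  "ok p q \<longleftrightarrow> snd p \<noteq> snd q \<and> mulc (invc (fst p)) (snd p) \<noteq> mulc (invc (fst q)) (snd q)"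

lemma search:
  assumes t0: "\<theta> (0,0) = (0,0)"
  and dt: "inj_on \<theta> Cs"
  and dd: "inj_on (\<lambda>x. mulc (invc x) (\<theta> x)) Cs"
  and r: "\<And>x. x \<in> Cs \<Longrightarrow> \<theta> x \<in> Cs"
  shows "Qc \<theta>"
proof -
  have okI: "\<And>x y. x \<in> Cs \<Longrightarrow> y \<in> Cs \<Longrightarrow> x \<noteq> y \<Longrightarrow> ok (x, \<theta> x) (y, \<theta> y)"
    unfolding ok_def using dt dd by (auto dest: inj_onD)
  have r1: "\<theta> (0,1) \<in> {(0,0),(0,1),(0,2),(0,3),(1,0),(1,1),(1,2),(1,3)}" using r[of "(0,1)"] by (simp add: Cs_def)
  have o0_1: "ok ((0,0), \<theta> (0,0)) ((0,1), \<theta> (0,1))" by (rule okI) (simp_all add: Cs_def)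
  have r2: "\<theta> (0,2) \<in> {(0,0),(0,1),(0,2),(0,3),(1,0),(1,1),(1,2),(1,3)}" using r[of "(0,2)"] by (simp add: Cs_def)
  have o0_2: "ok ((0,0), \<theta> (0,0)) ((0,2), \<theta> (0,2))" by (rule okI) (simp_all add: Cs_def)
  have o1_2: "ok ((0,1), \<theta> (0,1)) ((0,2), \<theta> (0,2))" by (rule okI) (simp_all add: Cs_def)
  have r3: "\<theta> (0,3) \<in> {(0,0),(0,1),(0,2),(0,3),(1,0),(1,1),(1,2),(1,3)}" using r[of "(0,3)"] by (simp add: Cs_def)
  have o0_3: "ok ((0,0), \<theta> (0,0)) ((0,3), \<theta> (0,3))" by (rule okI) (simp_all add: Cs_def)
  have o1_3: "ok ((0,1), \<theta> (0,1)) ((0,3), \<theta> (0,3))" by (rule okI) (simp_all add: Cs_def)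
  have o2_3: "ok ((0,2), \<theta> (0,2)) ((0,3), \<theta> (0,3))" by (rule okI) (simp_all add: Cs_def)
  have r4: "\<theta> (1,0) \<in> {(0,0),(0,1),(0,2),(0,3),(1,0),(1,1),(1,2),(1,3)}" using r[of "(1,0)"] by (simp add: Cs_def)
  have o0_4: "ok ((0,0), \<theta> (0,0)) ((1,0), \<theta> (1,0))" by (rule okI) (simp_all add: Cs_def)
  have o1_4: "ok ((0,1), \<theta> (0,1)) ((1,0), \<theta> (1,0))" by (rule okI) (simp_all add: Cs_def)
  have o2_4: "ok ((0,2), \<theta> (0,2)) ((1,0), \<theta> (1,0))" by (rule okI) (simp_all add: Cs_def)
  have o3_4: "ok ((0,3), \<theta> (0,3)) ((1,0), \<theta> (1,0))" by (rule okI) (simp_all add: Cs_def)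
  have r5: "\<theta> (1,1) \<in> {(0,0),(0,1),(0,2),(0,3),(1,0),(1,1),(1,2),(1,3)}" using r[of "(1,1)"] by (simp add: Cs_def)
  have o0_5: "ok ((0,0), \<theta> (0,0)) ((1,1), \<theta> (1,1))" by (rule okI) (simp_all add: Cs_def)
  have o1_5: "ok ((0,1), \<theta> (0,1)) ((1,1), \<theta> (1,1))" by (rule okI) (simp_all add: Cs_def)
  have o2_5: "ok ((0,2), \<theta> (0,2)) ((1,1), \<theta> (1,1))" by (rule okI) (simp_all add: Cs_def)
  have o3_5: "ok ((0,3), \<theta> (0,3)) ((1,1), \<theta> (1,1))" by (rule okI) (simp_all add: Cs_def)
  have o4_5: "ok ((1,0), \<theta> (1,0)) ((1,1), \<theta> (1,1))" by (rule okI) (simp_all add: Cs_def)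
  have r6: "\<theta> (1,2) \<in> {(0,0),(0,1),(0,2),(0,3),(1,0),(1,1),(1,2),(1,3)}" using r[of "(1,2)"] by (simp add: Cs_def)
  have o0_6: "ok ((0,0), \<theta> (0,0)) ((1,2), \<theta> (1,2))" by (rule okI) (simp_all add: Cs_def)
  have o1_6: "ok ((0,1), \<theta> (0,1)) ((1,2), \<theta> (1,2))" by (rule okI) (simp_all add: Cs_def)
  have o2_6: "ok ((0,2), \<theta> (0,2)) ((1,2), \<theta> (1,2))" by (rule okI) (simp_all add: Cs_def)
  have o3_6: "ok ((0,3), \<theta> (0,3)) ((1,2), \<theta> (1,2))" by (rule okI) (simp_all add: Cs_def)
  have o4_6: "ok ((1,0), \<theta> (1,0)) ((1,2), \<theta> (1,2))" by (rule okI) (simp_all add: Cs_def)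
  have o5_6: "ok ((1,1), \<theta> (1,1)) ((1,2), \<theta> (1,2))" by (rule okI) (simp_all add: Cs_def)
  have r7: "\<theta> (1,3) \<in> {(0,0),(0,1),(0,2),(0,3),(1,0),(1,1),(1,2),(1,3)}" using r[of "(1,3)"] by (simp add: Cs_def)
  have o0_7: "ok ((0,0), \<theta> (0,0)) ((1,3), \<theta> (1,3))" by (rule okI) (simp_all add: Cs_def)
  have o1_7: "ok ((0,1), \<theta> (0,1)) ((1,3), \<theta> (1,3))" by (rule okI) (simp_all add: Cs_def)
  have o2_7: "ok ((0,2), \<theta> (0,2)) ((1,3), \<theta> (1,3))" by (rule okI) (simp_all add: Cs_def)
  have o3_7: "ok ((0,3), \<theta> (0,3)) ((1,3), \<theta> (1,3))" by (rule okI) (simp_all add: Cs_def)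
  have o4_7: "ok ((1,0), \<theta> (1,0)) ((1,3), \<theta> (1,3))" by (rule okI) (simp_all add: Cs_def)
  have o5_7: "ok ((1,1), \<theta> (1,1)) ((1,3), \<theta> (1,3))" by (rule okI) (simp_all add: Cs_def)
  have o6_7: "ok ((1,2), \<theta> (1,2)) ((1,3), \<theta> (1,3))" by (rule okI) (simp_all add: Cs_def)
  show ?thesis using t0
    by ((insert r1, (elim insertE emptyE)) ; (insert o0_1, simp add: ok_def mulc_def invc_def)? ; ((insert r2, (elim insertE emptyE)) ; (insert o0_2 o1_2, simp add: ok_def mulc_def invc_def)? ; ((insert r3, (elim insertE emptyE)) ; (insert o0_3 o1_3 o2_3, simp add: ok_def mulc_def invc_def)? ; ((insert r4, (elim insertE emptyE)) ; (insert o0_4 o1_4 o2_4 o3_4, simp add: ok_def mulc_def invc_def)? ; ((insert r5, (elim insertE emptyE)) ; (insert o0_5 o1_5 o2_5 o3_5 o4_5, simp add: ok_def mulc_def invc_def)? ; ((insert r6, (elim insertE emptyE)) ; (insert o0_6 o1_6 o2_6 o3_6 o4_6 o5_6, simp add: ok_def mulc_def invc_def)? ; ((insert r7, (elim insertE emptyE)) ; (insert o0_7 o1_7 o2_7 o3_7 o4_7 o5_7 o6_7, simp add: ok_def mulc_def invc_def)? ; (simp add: leaf_simps insert_commute))))))))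
qed


theorem corollary2:
  fixes \<theta> :: "int \<times> int \<Rightarrow> int \<times> int"
  assumes "normalised_orthomorphism Z2Z4 \<theta>"
  shows "(card (A_set Z2Z4 \<theta> 4 4 \<inter> \<theta> ` A_set Z2Z4 \<theta> 4 4) = 1
       \<and> card (A_set Z2Z4 \<theta> 4 4 \<inter> \<theta> ` A_set Z2Z4 \<theta> 2 4) = 1
       \<and> card (A_set Z2Z4 \<theta> 4 2 \<inter> \<theta> ` A_set Z2Z4 \<theta> 4 4) = 1
       \<and> card (A_set Z2Z4 \<theta> 4 2 \<inter> \<theta> ` A_set Z2Z4 \<theta> 2 4) = 1)
     \<and> (\<forall>u. A_set Z2Z4 \<theta> 2 2 = {u} \<longrightarrow>
           \<theta> ` A_set Z2Z4 \<theta> 4 2 = {u, u \<otimes>\<^bsub>Z2Z4\<^esub> \<theta> u}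
         \<and> A_set Z2Z4 \<theta> 2 4 = {\<theta> u, u \<otimes>\<^bsub>Z2Z4\<^esub> \<theta> u})
     \<and> (\<forall>u. A_set Z2Z4 \<theta> 2 2 = {u} \<longrightarrow>
           (\<lambda>g. inv\<^bsub>Z2Z4\<^esub> g \<otimes>\<^bsub>Z2Z4\<^esub> \<theta> g) ` A_set Z2Z4 \<theta> 4 4 = {u, \<theta> u})"
proof -
  have H: "bij_betw \<theta> Cs Cs \<and> \<theta> (0,0) = (0,0) \<and>
     bij_betw (\<lambda>x. inv\<^bsub>Z2Z4\<^esub> x \<otimes>\<^bsub>Z2Z4\<^esub> \<theta> x) Cs Cs"
    using assms unfolding normalised_orthomorphism_def carr one .
  have b1: "bij_betw \<theta> Cs Cs" using H by (rule conjunct1)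
  have t0: "\<theta> (0,0) = (0,0)" using H by (rule conjunct2[THEN conjunct1])
  have b2: "bij_betw (\<lambda>x. inv\<^bsub>Z2Z4\<^esub> x \<otimes>\<^bsub>Z2Z4\<^esub> \<theta> x) Cs Cs" using H by (rule conjunct2[THEN conjunct2])
  have rC: "\<And>x. x \<in> Cs \<Longrightarrow> \<theta> x \<in> Cs" using b1 by (rule bij_betw_apply)
  have dC: "\<And>x. x \<in> Cs \<Longrightarrow> inv\<^bsub>Z2Z4\<^esub> x \<otimes>\<^bsub>Z2Z4\<^esub> \<theta> x = mulc (invc x) (\<theta> x)"
  proof -
    fix x assume "x \<in> Cs"
    then have "x \<in> carrier Z2Z4" by (simp only: carr)
    then show "inv\<^bsub>Z2Z4\<^esub> x \<otimes>\<^bsub>Z2Z4\<^esub> \<theta> x = mulc (invc x) (\<theta> x)"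
      by (simp only: inv mul mulc_def invc_def fst_conv snd_conv)
  qed
  have dt: "inj_on \<theta> Cs" using b1 by (rule bij_betw_imp_inj_on)
  have i2: "inj_on (\<lambda>x. inv\<^bsub>Z2Z4\<^esub> x \<otimes>\<^bsub>Z2Z4\<^esub> \<theta> x) Cs" using b2 by (rule bij_betw_imp_inj_on)
  have ceq: "inj_on (\<lambda>x. inv\<^bsub>Z2Z4\<^esub> x \<otimes>\<^bsub>Z2Z4\<^esub> \<theta> x) Cs = inj_on (\<lambda>x. mulc (invc x) (\<theta> x)) Cs"
    by (rule inj_on_cong) (rule dC)
  have dd: "inj_on (\<lambda>x. mulc (invc x) (\<theta> x)) Cs" using i2 ceq by simp
  have Q: "Qc \<theta>" by (rule search[OF t0 dt dd rC])
  have AS: "\<And>i j. A_set Z2Z4 \<theta> i j = Af \<theta> i j"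
  proof -
    have o: "\<And>x. x \<in> Cs \<Longrightarrow> group.ord Z2Z4 x = ordf x" by (rule ord) (simp only: carr)
    show "\<And>i j. A_set Z2Z4 \<theta> i j = Af \<theta> i j"
      unfolding A_set_def afl_def carr set_filter Cs_csl[symmetric]
      by (rule Collect_cong) (auto simp: o rC)
  qed
  have M: "\<And>x y. x \<otimes>\<^bsub>Z2Z4\<^esub> y = mulc x y" by (simp add: mul mulc_def)
  have I: "(\<lambda>g. inv\<^bsub>Z2Z4\<^esub> g \<otimes>\<^bsub>Z2Z4\<^esub> \<theta> g) ` Af \<theta> 4 4 = (\<lambda>g. mulc (invc g) (\<theta> g)) ` Af \<theta> 4 4"
    by (rule image_cong) (auto simp: afl_def Cs_csl[symmetric] dC)
  show ?thesis unfolding AS unfolding I unfolding M using Q unfolding Qc_def .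
qed

end
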